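(* Let $\mathbf{h}_1,\mathbf{h}_2\in\mathbb{C}^M$ be linearly independent, $P,\sigma^2>0$, and let $\kappa=\lambda_1/\lambda_2$ and $\theta$ be as in the context. Define $\eta(\kappa,\theta)=10\log_{10}\frac{\mathrm{SNR}_{\rm md}}{\mathrm{SNR}_{\rm zf}}$. Then: (1) if $0<\kappa\le1$ and $0\le\sin\theta\le\kappa$: $\eta=10\log_{10}\frac{1+\sin^2\theta}{(1-\sin\theta)^2}$; (2) if $0<\kappa\le1$ and $\kappa<\sin\theta<1$: $\eta=10\log_{10}\frac{(1+\sin^2\theta)(\kappa+\sin^2\theta)(1+1/\kappa)}{\cos^4\theta}$; (3) if $\kappa>1$ and $0\le\sin\theta\le1/\kappa$: $\eta=10\log_{10}\frac{1+\sin^2\theta}{(1-\sin\theta)^2}$; (4) if $\kappa>1$ and $1/\kappa<\sin\theta<1$: $\eta=10\log_{10}\frac{(1+\sin^2\theta)(1/\kappa+\sin^2\theta)(1+\kappa)}{\cos^4\theta}$.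
   Context: $\mathbf{A}=\mathbf{h}_1\mathbf{h}_1^H-\mathbf{h}_2\mathbf{h}_2^H=\mathbf{V}\,\mathrm{diag}(\lambda_1,-\lambda_2,0,\dots,0)\mathbf{V}^H$ with $\mathbf{V}$ unitary and $\lambda_1,\lambda_2>0$; $\tilde h_{1,1}$ is the first entry of $\mathbf{V}^H\mathbf{h}_1$ and $\theta=\arccos\frac{\sqrt{\lambda_1}}{|\tilde h_{1,1}|}\in[0,\pi/2)$. With $\mathbf{H}=[\mathbf{h}_1\ \mathbf{h}_2]$ and $\mu_1,\mu_2$ the eigenvalues of $\mathbf{H}^H\mathbf{H}$: $\mathrm{SNR}_{\rm zf}=\frac{P}{\sigma^2\sum_{i=1}^2[(\mathbf{H}^H\mathbf{H})^{-1}]_{i,i}}=\frac{P\mu_1\mu_2}{\sigma^2(\mu_1+\mu_2)}$, and $\mathrm{SNR}_{\rm md}=\frac{1}{\sigma^2}\max_{\mathbf{w}\in\mathbb{C}^M,\ \|\mathbf{w}\|^2=P}\min\{|\mathbf{h}_1^H\mathbf{w}|^2,|\mathbf{h}_2^H\mathbf{w}|^2\}$. *)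

theory Defs
  imports "HOL-Analysis.Analysis"
begin

text \<open>Vectors in C^M are modelled as complex^'m for a finite index type 'm (M = CARD('m)).\<close>

definition cinner :: "complex^'m \<Rightarrow> complex^'m \<Rightarrow> complex" where
  "cinner h w = (\<Sum>i\<in>UNIV. cnj (h $ i) * w $ i)"

definition outer :: "complex^'m \<Rightarrow> complex^'m^'m" where
  "outer h = (\<chi> i j. h $ i * cnj (h $ j))"

definition cadj :: "complex^'n^'m \<Rightarrow> complex^'m^'n" where
  "cadj A = (\<chi> i j. cnj (A $ j $ i))"

definition unitary :: "complex^'m^'m \<Rightarrow> bool" where
  "unitary V \<longleftrightarrow> cadj V ** V = mat 1 \<and> V ** cadj V = mat 1"

definition cdiag :: "('m \<Rightarrow> complex) \<Rightarrow> complex^'m^'m" where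
  "cdiag d = (\<chi> i j. if i = j then d i else 0)"

definition lin_indep2 :: "complex^'m \<Rightarrow> complex^'m \<Rightarrow> bool" where
  "lin_indep2 h1 h2 \<longleftrightarrow> (\<forall>a b::complex. a *s h1 + b *s h2 = 0 \<longrightarrow> a = 0 \<and> b = 0)"

definition chanmat :: "complex^'m \<Rightarrow> complex^'m \<Rightarrow> complex^2^'m" where
  "chanmat h1 h2 = (\<chi> i j. if j = 1 then h1 $ i else h2 $ i)"

definition snr_zf :: "real \<Rightarrow> real \<Rightarrow> complex^'m \<Rightarrow> complex^'m \<Rightarrow> real" where
  "snr_zf P \<sigma> h1 h2 =
     P / (\<sigma>\<^sup>2 * Re (\<Sum>i\<in>UNIV. matrix_inv (cadj (chanmat h1 h2) ** chanmat h1 h2) $ i $ i))"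

text \<open>SNR_md = (1/sigma^2) max_{||w||^2 = P} min(|h1^H w|^2, |h2^H w|^2)
  (the maximum is attained by compactness, so it is the supremum).\<close>
definition snr_md :: "real \<Rightarrow> real \<Rightarrow> complex^'m \<Rightarrow> complex^'m \<Rightarrow> real" where
  "snr_md P \<sigma> h1 h2 =
     (1 / \<sigma>\<^sup>2) * Sup {min ((cmod (cinner h1 w))\<^sup>2) ((cmod (cinner h2 w))\<^sup>2) | w. (norm w)\<^sup>2 = P}"

end

theory Submission
  imports Defs
begin



lemma cinner_add_right: "cinner h (u + v) = cinner h u + cinner h v"
  by (simp add: cinner_def distrib_left sum.distrib)
lemma cinner_add_left: "cinner (u + v) h = cinner u h + cinner v h"
  by (simp add: cinner_def distrib_right sum.distrib)
lemma cinner_smult_right: "cinner h (c *s u) = c * cinner h u"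
  by (simp add: cinner_def sum_distrib_left algebra_simps)
lemma cinner_smult_left: "cinner (c *s h) u = cnj c * cinner h u"
  by (simp add: cinner_def sum_distrib_left algebra_simps)
lemma cinner_cnj: "cnj (cinner h u) = cinner u h"
  by (simp add: cinner_def mult.commute)
lemma norm_sq_vec: "(norm (w::complex^'m))\<^sup>2 = (\<Sum>i\<in>UNIV. (cmod (w$i))\<^sup>2)"
  by (simp add: norm_vec_def L2_set_def sum_nonneg)
lemma cinner_self: "cinner w w = complex_of_real ((norm w)\<^sup>2)"
  unfolding norm_sq_vec cinner_def of_real_sum
  by (intro sum.cong refl) (metis complex_norm_square mult.commute of_real_power)
lemma cinner_CS: "cmod (cinner h w) \<le> norm h * norm w"
proof -
  have "cmod (cinner h w) \<le> (\<Sum>i\<in>UNIV. \<bar>cmod (h$i)\<bar> * \<bar>cmod (w$i)\<bar>)"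
    unfolding cinner_def by (rule order_trans[OF norm_sum]) (simp add: norm_mult)
  also have "\<dots> \<le> norm h * norm w" unfolding norm_vec_def by (rule L2_set_mult_ineq)
  finally show ?thesis .
qed



lemma Qbound:
  fixes h1 h2 w :: "complex^'m"
  defines "g1 \<equiv> (norm h1)\<^sup>2" and "g2 \<equiv> (norm h2)\<^sup>2" and "z \<equiv> cinner h1 h2"
  defines "D \<equiv> g1 * g2 - (cmod z)\<^sup>2"
  assumes D: "D > 0"
  shows "g2 * (cmod (cinner h1 w))\<^sup>2 + g1 * (cmod (cinner h2 w))\<^sup>2
           - 2 * Re (z * cnj (cinner h1 w) * cinner h2 w) \<le> D * (norm w)\<^sup>2"
proof -
  define x where "x = cinner h1 w"
  define y where "y = cinner h2 w"
  define a where "a = of_real g2 * x - z * y"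
  define b where "b = of_real g1 * y - cnj z * x"
  define p where "p = a *s h1 + b *s h2"
  have h11: "cinner h1 h1 = of_real g1" unfolding g1_def by (rule cinner_self)
  have h22: "cinner h2 h2 = of_real g2" unfolding g2_def by (rule cinner_self)
  have h21: "cinner h2 h1 = cnj z" unfolding z_def by (simp add: cinner_cnj)
  have zz: "z * cnj z = of_real ((cmod z)\<^sup>2)" by (rule complex_norm_square[symmetric])
  have p1: "cinner h1 p = of_real D * x"
    unfolding p_def cinner_add_right cinner_smult_right h11 z_def[symmetric] a_def b_def D_def
    by (simp add: algebra_simps zz)
  have p2: "cinner h2 p = of_real D * y"
    unfolding p_def cinner_add_right cinner_smult_right h22 h21 a_def b_def D_def
    by (simp add: algebra_simps zz)
  define q where "q = cinner p w"
  have q: "q = cnj a * x + cnj b * y"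
    unfolding q_def p_def cinner_add_left cinner_smult_left x_def y_def ..
  have pp: "cinner p p = of_real D * q"
  proof -
    have "cinner p p = cnj a * cinner h1 p + cnj b * cinner h2 p"
      by (subst (1) p_def) (simp only: cinner_add_left cinner_smult_left)
    thus ?thesis unfolding p1 p2 q by (simp add: algebra_simps)
  qed
  have np: "of_real ((norm p)\<^sup>2) = of_real D * q" using pp cinner_self by metis
  hence qre: "q = of_real ((norm p)\<^sup>2 / D)" using D by (simp add: field_simps)
  define r where "r = (norm p)\<^sup>2 / D"
  have r0: "r \<ge> 0" unfolding r_def using D by simp
  have np2: "(norm p)\<^sup>2 = D * r" unfolding r_def using D by simp
  have cs: "(cmod q)\<^sup>2 \<le> (norm p)\<^sup>2 * (norm w)\<^sup>2"
    unfolding q_def by (metis cinner_CS norm_ge_zero power_mono power_mult_distrib)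
  have rle: "r \<le> D * (norm w)\<^sup>2"
  proof (cases "r = 0")
    case True thus ?thesis using D by simp
  next
    case False
    hence "r > 0" using r0 by simp
    have "r * r \<le> r * (D * (norm w)\<^sup>2)" using cs unfolding qre r_def[symmetric] np2
      using D by (simp add: power2_eq_square r0 algebra_simps)
    thus ?thesis using \<open>r > 0\<close> by simp
  qed
  have "Re q = g2 * (cmod x)\<^sup>2 + g1 * (cmod y)\<^sup>2 - 2 * Re (z * cnj x * y)"
    unfolding q a_def b_def
    by (simp add: algebra_simps cmod_power2[unfolded power2_eq_square] power2_eq_square)
  moreover have "Re q = r" unfolding qre r_def by simp
  ultimately show ?thesis using rle x_def y_def by simp
qed


lemma alg1:
  fixes X Y g1 g2 \<rho> :: real
  assumes "0 \<le> X" "0 \<le> Y" "\<rho> \<le> g1" "\<rho> \<le> g2" "0 \<le> g1" "0 \<le> g2"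
  shows "(g1 + g2 - 2*\<rho>) * min (X\<^sup>2) (Y\<^sup>2) \<le> g2 * X\<^sup>2 + g1 * Y\<^sup>2 - 2*\<rho>*X*Y"
proof (cases "X \<le> Y")
  case True
  then obtain v where v: "Y = X + v" "v \<ge> 0" by (intro that[of "Y - X"]) auto
  have "min (X\<^sup>2) (Y\<^sup>2) = X\<^sup>2" using True assms by (simp add: power_mono)
  moreover have "0 \<le> 2*(g1-\<rho>)*X * v + g1* v\<^sup>2" using assms v by simp
  ultimately show ?thesis unfolding v by (simp add: power2_eq_square algebra_simps)
next
  case False
  then obtain u where v: "X = Y + u" "u \<ge> 0" by (intro that[of "X - Y"]) auto
  have "min (X\<^sup>2) (Y\<^sup>2) = Y\<^sup>2" using False assms by (simp add: power_mono)
  moreover have "0 \<le> 2*(g2-\<rho>)*Y * u + g2* u\<^sup>2" using assms v by simp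
  ultimately show ?thesis unfolding v by (simp add: power2_eq_square algebra_simps)
qed



lemma md_sup:
  fixes h1 h2 :: "complex^'m" and P :: real
  defines "g1 \<equiv> (norm h1)\<^sup>2" and "g2 \<equiv> (norm h2)\<^sup>2" and "z \<equiv> cinner h1 h2"
  defines "\<rho> \<equiv> cmod z"
  defines "D \<equiv> g1 * g2 - \<rho>\<^sup>2"
  assumes D: "D > 0" and P: "P > 0" and g12: "g1 \<le> g2"
  shows "Sup {min ((cmod (cinner h1 w))\<^sup>2) ((cmod (cinner h2 w))\<^sup>2) | w. (norm w)\<^sup>2 = P}
         = P * (if \<rho> \<ge> g1 then g1 else D / (g1 + g2 - 2*\<rho>))"
proof -
  have r0: "\<rho> \<ge> 0" unfolding \<rho>_def by simp
  have g1p: "g1 > 0"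
  proof (rule ccontr)
    assume "\<not> g1 > 0"
    hence "g1 = 0" unfolding g1_def by simp
    thus False using D unfolding D_def by simp
  qed
  have h11: "cinner h1 h1 = of_real g1" unfolding g1_def by (rule cinner_self)
  have h22: "cinner h2 h2 = of_real g2" unfolding g2_def by (rule cinner_self)
  have h21: "cinner h2 h1 = cnj z" unfolding z_def by (simp add: cinner_cnj)
  have zz: "z * cnj z = of_real (\<rho>\<^sup>2)" unfolding \<rho>_def by (rule complex_norm_square[symmetric])
  define val where "val = (if \<rho> \<ge> g1 then g1 else D / (g1 + g2 - 2*\<rho>))"
  let ?S = "{min ((cmod (cinner h1 w))\<^sup>2) ((cmod (cinner h2 w))\<^sup>2) | w. (norm w)\<^sup>2 = P}"
  have ub: "m \<le> P * val" if "m \<in> ?S" for m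
  proof -
    obtain w where w: "(norm w)\<^sup>2 = P" and m: "m = min ((cmod (cinner h1 w))\<^sup>2) ((cmod (cinner h2 w))\<^sup>2)"
      using \<open>m \<in> ?S\<close> by blast
    define X where "X = cmod (cinner h1 w)"
    define Y where "Y = cmod (cinner h2 w)"
    have X: "X\<^sup>2 \<le> g1 * P"
    proof -
      have "X \<le> norm h1 * norm w" unfolding X_def by (rule cinner_CS)
      hence "X\<^sup>2 \<le> (norm h1 * norm w)\<^sup>2" by (simp add: X_def power_mono)
      thus ?thesis by (simp add: power_mult_distrib g1_def w)
    qed
    show ?thesis
    proof (cases "\<rho> \<ge> g1")
      case True
      have "m \<le> X\<^sup>2" unfolding m X_def by simp
      thus ?thesis using X True unfolding val_def by (simp add: mult.commute)
    next
      case False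
      have Q: "g2 * X\<^sup>2 + g1 * Y\<^sup>2 - 2 * Re (z * cnj (cinner h1 w) * cinner h2 w) \<le> D * P"
        using Qbound[of h1 h2 w] D unfolding X_def Y_def z_def D_def g1_def g2_def \<rho>_def w by simp
      have "Re (z * cnj (cinner h1 w) * cinner h2 w) \<le> cmod (z * cnj (cinner h1 w) * cinner h2 w)"
        by (rule complex_Re_le_cmod)
      also have "\<dots> = \<rho> * X * Y" unfolding \<rho>_def X_def Y_def by (simp add: norm_mult)
      finally have Q2: "g2 * X\<^sup>2 + g1 * Y\<^sup>2 - 2*\<rho>*X*Y \<le> D * P" using Q by simp
      have "(g1 + g2 - 2*\<rho>) * m \<le> g2 * X\<^sup>2 + g1 * Y\<^sup>2 - 2*\<rho>*X*Y"
        unfolding m X_def[symmetric] Y_def[symmetric]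
        by (rule alg1) (use False g12 g1p in \<open>auto simp: X_def Y_def\<close>)
      hence le: "(g1 + g2 - 2*\<rho>) * m \<le> D * P" using Q2 by simp
      have pos: "g1 + g2 - 2*\<rho> > 0" using False g12 by simp
      have "m \<le> D * P / (g1 + g2 - 2*\<rho>)" using le pos by (simp add: field_simps)
      thus ?thesis unfolding val_def using False by (simp add: mult.commute)
    qed
  qed
  have att: "P * val \<in> ?S"
  proof (cases "\<rho> \<ge> g1")
    case True
    define c where "c = sqrt (P / g1)"
    define w where "w = complex_of_real c *s h1"
    have c2: "c\<^sup>2 = P / g1" unfolding c_def using P g1p by simp
    have "of_real ((norm w)\<^sup>2) = cinner w w" by (rule cinner_self[symmetric])
    also have "\<dots> = of_real (c\<^sup>2 * g1)" unfolding w_def cinner_smult_left cinner_smult_right h11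
      by (simp add: power2_eq_square)
    finally have nw: "(norm w)\<^sup>2 = P" unfolding c2 using g1p by (metis nonzero_eq_divide_eq of_real_eq_iff order_less_irrefl)
    have x: "(cmod (cinner h1 w))\<^sup>2 = P * g1" unfolding w_def cinner_smult_right h11
      using g1p c2 by (simp add: norm_mult power_mult_distrib power2_eq_square field_simps)
    have y: "(cmod (cinner h2 w))\<^sup>2 = P * \<rho>\<^sup>2 / g1" unfolding w_def cinner_smult_right h21
      using g1p c2 by (simp add: norm_mult power_mult_distrib \<rho>_def)
    have "g1 * g1 \<le> \<rho> * \<rho>" using True g1p by (simp add: mult_mono)
    hence "P * g1 \<le> P * \<rho>\<^sup>2 / g1" using g1p P by (simp add: field_simps power2_eq_square)
    hence "min ((cmod (cinner h1 w))\<^sup>2) ((cmod (cinner h2 w))\<^sup>2) = P * val"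
      unfolding x y val_def using True by simp
    thus ?thesis using nw unfolding mem_Collect_eq by (intro exI[of _ w]) simp
  next
    case False
    have pos: "g1 + g2 - 2*\<rho> > 0" using False g12 by simp
    define \<omega> where "\<omega> = (if z = 0 then 1 else cnj z / of_real \<rho>)"
    have zw: "z * \<omega> = of_real \<rho>" and cz: "cnj z = of_real \<rho> * \<omega>" and ww: "\<omega> * cnj \<omega> = 1"
    proof -
      show "z * \<omega> = of_real \<rho>"
        unfolding \<omega>_def using zz by (auto simp: \<rho>_def field_simps power2_eq_square)
      show "cnj z = of_real \<rho> * \<omega>" unfolding \<omega>_def by (auto simp: \<rho>_def)
      show "\<omega> * cnj \<omega> = 1" unfolding \<omega>_def using zz
        by (auto simp: \<rho>_def field_simps power2_eq_square)
    qed
    define \<tau> where "\<tau> = sqrt (P * D / (g1 + g2 - 2*\<rho>))"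
    have t2: "\<tau>\<^sup>2 = P * D / (g1 + g2 - 2*\<rho>)" unfolding \<tau>_def using P D pos by simp
    define k :: complex where "k = of_real (\<tau> / D)"
    define a :: complex where "a = k * of_real (g2 - \<rho>)"
    define b where "b = k * (of_real g1 * \<omega> - cnj z)"
    define w where "w = a *s h1 + b *s h2"
    have kD: "k * of_real D = of_real \<tau>" unfolding k_def using D by (simp flip: of_real_mult del: of_real_divide)
    have Dc: "complex_of_real D = of_real g1 * of_real g2 - z * cnj z"
      unfolding D_def zz by simp
    have x: "cinner h1 w = of_real \<tau>"
    proof -
      have "cinner h1 w = a * of_real g1 + b * z"
        unfolding w_def cinner_add_right cinner_smult_right h11 z_def by simp
      also have "\<dots> = k * (of_real g1 * of_real g2 - of_real g1 * of_real \<rho> + of_real g1 * (z * \<omega>) - z * cnj z)"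
        unfolding a_def b_def by (simp add: algebra_simps)
      also have "\<dots> = k * of_real D" unfolding zw Dc by simp
      finally show ?thesis using kD by simp
    qed
    have y: "cinner h2 w = of_real \<tau> * \<omega>"
    proof -
      have "cinner h2 w = a * cnj z + b * of_real g2"
        unfolding w_def cinner_add_right cinner_smult_right h22 h21 by simp
      also have "\<dots> = k * (of_real g1 * of_real g2 * \<omega> - of_real \<rho> * cnj z)"
        unfolding a_def b_def by (simp add: algebra_simps)
      also have "\<dots> = k * of_real D * \<omega>" unfolding cz Dc
        using zw by (simp add: algebra_simps)
      finally show ?thesis using kD by simp
    qed
    have "of_real ((norm w)\<^sup>2) = cinner w w" by (rule cinner_self[symmetric])
    also have "\<dots> = cnj a * cinner h1 w + cnj b * cinner h2 w"
      by (subst (1) w_def) (simp only: cinner_add_left cinner_smult_left)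
    also have "\<dots> = of_real P"
    proof -
      have ck: "cnj k = k" unfolding k_def by simp
      have "cnj a * of_real \<tau> + cnj b * (of_real \<tau> * \<omega>)
          = k * of_real \<tau> * (of_real (g2 - \<rho>) + of_real g1 * (\<omega> * cnj \<omega>) - z * \<omega>)"
        unfolding a_def b_def by (simp add: ck algebra_simps)
      also have "\<dots> = of_real (\<tau> / D * \<tau> * (g1 + g2 - 2 * \<rho>))" unfolding ww zw k_def by simp
      also have "\<dots> = of_real P"
      proof -
        have "\<tau> / D * \<tau> * (g1 + g2 - 2 * \<rho>) = \<tau>\<^sup>2 * (g1 + g2 - 2 * \<rho>) / D"
          by (simp add: power2_eq_square)
        also have "\<dots> = P" unfolding t2 using D pos by simp
        finally show ?thesis by simp
      qed
      finally show ?thesis unfolding x y .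
    qed
    finally have nw: "(norm w)\<^sup>2 = P" by (simp only: of_real_eq_iff)
    have "min ((cmod (cinner h1 w))\<^sup>2) ((cmod (cinner h2 w))\<^sup>2) = P * val"
    proof -
      have "(cmod \<omega>)\<^sup>2 = 1" using ww complex_norm_square[of \<omega>] by (metis of_real_eq_1_iff)
      hence "cmod \<omega> = 1" using norm_ge_zero[of \<omega>] by (simp add: power2_eq_1_iff)
      hence "(cmod (cinner h2 w))\<^sup>2 = \<tau>\<^sup>2" unfolding y by (simp add: norm_mult)
      moreover have "(cmod (cinner h1 w))\<^sup>2 = \<tau>\<^sup>2" unfolding x by simp
      ultimately show ?thesis unfolding val_def t2 using False by simp
    qed
    thus ?thesis using nw unfolding mem_Collect_eq by (intro exI[of _ w]) simp
  qed
  show ?thesis unfolding val_def[symmetric]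
    by (rule cSup_eq_maximum[OF att ub])
qed



lemma matrix_inv_eq:
  fixes G :: "'a::comm_ring_1^'n^'n"
  assumes "G ** M = mat 1" "M ** G = mat 1"
  shows "matrix_inv G = M"
proof -
  have ex: "\<exists>A'. G ** A' = mat 1 \<and> A' ** G = mat 1" using assms by blast
  have s: "G ** matrix_inv G = mat 1 \<and> matrix_inv G ** G = mat 1"
    unfolding matrix_inv_def by (rule someI_ex[OF ex])
  have "matrix_inv G = matrix_inv G ** (G ** M)" using assms by simp
  also have "\<dots> = M" using s by (simp add: matrix_mul_assoc)
  finally show ?thesis .
qed

lemma zf_val:
  fixes h1 h2 :: "complex^'m"
  defines "g1 \<equiv> (norm h1)\<^sup>2" and "g2 \<equiv> (norm h2)\<^sup>2" and "z \<equiv> cinner h1 h2"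
  defines "D \<equiv> g1 * g2 - (cmod z)\<^sup>2"
  assumes D: "D > 0"
  shows "snr_zf P \<sigma> h1 h2 = P * D / (\<sigma>\<^sup>2 * (g1 + g2))"
proof -
  have h11: "cinner h1 h1 = of_real g1" unfolding g1_def by (rule cinner_self)
  have h22: "cinner h2 h2 = of_real g2" unfolding g2_def by (rule cinner_self)
  have h21: "cinner h2 h1 = cnj z" unfolding z_def by (simp add: cinner_cnj)
  have zz: "z * cnj z = of_real ((cmod z)\<^sup>2)" by (rule complex_norm_square[symmetric])
  have n12: "(2::2) \<noteq> 1" by simp
  define G where "G = cadj (chanmat h1 h2) ** chanmat h1 h2"
  have G: "G $ 1 $ 1 = of_real g1" "G $ 1 $ 2 = z" "G $ 2 $ 1 = cnj z" "G $ 2 $ 2 = of_real g2"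
    unfolding G_def matrix_matrix_mult_def cadj_def chanmat_def
    by (simp_all add: h11[symmetric] h22[symmetric] h21[symmetric] z_def cinner_def n12 mult.commute)
  define M :: "complex^2^2" where "M = (\<chi> i j. (if i = 1 then (if j = 1 then of_real g2 else - z)
         else (if j = 1 then - cnj z else of_real g1)) / of_real D)"
  have M: "M $ 1 $ 1 = of_real g2 / of_real D" "M $ 1 $ 2 = - z / of_real D"
     "M $ 2 $ 1 = - cnj z / of_real D" "M $ 2 $ 2 = of_real g1 / of_real D"
    unfolding M_def by (simp_all add: n12)
  have Dc: "complex_of_real D = of_real g1 * of_real g2 - z * cnj z" unfolding D_def zz by simp
  have Dn: "complex_of_real D \<noteq> 0" using D by simp
  have Dc': "of_real g1 * of_real g2 = of_real D + z * cnj z" unfolding Dc by simp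
  have Dc'': "of_real g2 * of_real g1 = of_real D + z * cnj z" unfolding Dc by simp
  have "G ** M = mat 1" 
    unfolding vec_eq_iff forall_2 matrix_matrix_mult_def mat_def
    using Dn by (simp add: sum_2 G M n12 add_divide_distrib[symmetric] diff_divide_distrib[symmetric] Dc' Dc'' mult.commute[of _ "cnj z"])
  moreover have "M ** G = mat 1" 
    unfolding vec_eq_iff forall_2 matrix_matrix_mult_def mat_def
    using Dn by (simp add: sum_2 G M n12 add_divide_distrib[symmetric] diff_divide_distrib[symmetric] Dc' Dc'' mult.commute[of _ "cnj z"])
  ultimately have inv: "matrix_inv G = M" by (rule matrix_inv_eq)
  have "(\<Sum>i\<in>UNIV. matrix_inv G $ i $ i) = of_real ((g1 + g2) / D)"
    unfolding inv sum_2 M by (simp add: add_divide_distrib)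
  thus ?thesis unfolding snr_zf_def G_def[symmetric] using D by simp
qed



lemma spectral_col:
  fixes h1 h2 :: "complex^'m" and V :: "complex^'m^'m" and i1 i2 :: 'm and d :: "'m \<Rightarrow> complex"
  assumes V: "unitary V"
    and eig: "outer h1 - outer h2 = V ** cdiag d ** cadj V"
  defines "v \<equiv> (\<chi> j. V $ j $ i1)"
  shows "cinner v v = 1"
    and "(cadj V *v h1) $ i1 = cinner v h1"
    and "(cadj V *v h2) $ i1 = cinner v h2"
    and "cinner h1 v *s h1 - cinner h2 v *s h2 = d i1 *s v"
proof -
  have VV: "cadj V ** V = mat 1" using V unfolding unitary_def by simp
  show "cinner v v = 1"
  proof -
    have "(cadj V ** V) $ i1 $ i1 = 1" unfolding VV by (simp add: mat_def)
    thus ?thesis unfolding matrix_matrix_mult_def cadj_def cinner_def v_def by simp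
  qed
  show "(cadj V *v h1) $ i1 = cinner v h1" "(cadj V *v h2) $ i1 = cinner v h2"
    unfolding matrix_vector_mult_def cadj_def cinner_def v_def by simp_all
  have AV: "(outer h1 - outer h2) ** V = V ** cdiag d"
    unfolding eig by (metis VV matrix_mul_assoc matrix_mul_rid)
  show "cinner h1 v *s h1 - cinner h2 v *s h2 = d i1 *s v"
  proof (subst vec_eq_iff, intro allI)
    fix j
    have l: "((outer h1 - outer h2) ** V) $ j $ i1 = h1$j * cinner h1 v - h2$j * cinner h2 v"
      unfolding matrix_matrix_mult_def outer_def cinner_def v_def
      by (simp add: sum_distrib_left algebra_simps sum_subtractf)
    have r: "(V ** cdiag d) $ j $ i1 = V $ j $ i1 * d i1"
      unfolding matrix_matrix_mult_def cdiag_def by (simp add: if_distrib cong: if_cong)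
    show "(cinner h1 v *s h1 - cinner h2 v *s h2) $ j = (d i1 *s v) $ j"
      using l r AV unfolding v_def by (simp add: mult.commute)
  qed
qed

lemma trace_cdiag: "trace (cdiag d) = (\<Sum>i\<in>UNIV. d i)"
  unfolding trace_def cdiag_def by simp

lemma cdiag_mult: "cdiag d ** cdiag e = cdiag (\<lambda>i. d i * e i)"
proof -
  have "(\<Sum>k\<in>UNIV. (if i = k then d i else 0) * (if k = j then e k else 0))
        = (if i = j then d i * e i else 0)" for i j :: 'a
  proof -
    have "(\<Sum>k\<in>UNIV. (if i = k then d i else 0) * (if k = j then e k else 0))
       = (\<Sum>k\<in>UNIV. if k = i then d i * (if i = j then e i else 0) else 0)"
      by (intro sum.cong refl) auto
    thus ?thesis by simp
  qed
  thus ?thesis unfolding cdiag_def matrix_matrix_mult_def by (simp add: vec_eq_iff)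
qed

lemma spectral_trace:
  fixes h1 h2 :: "complex^'m" and V :: "complex^'m^'m" and d :: "'m \<Rightarrow> complex"
  assumes V: "unitary V"
    and eig: "outer h1 - outer h2 = V ** cdiag d ** cadj V"
  shows "cinner h1 h1 - cinner h2 h2 = (\<Sum>i\<in>UNIV. d i)"
    and "(cinner h1 h1)\<^sup>2 + (cinner h2 h2)\<^sup>2 - 2 * (cinner h1 h2 * cinner h2 h1) = (\<Sum>i\<in>UNIV. (d i)\<^sup>2)"
proof -
  have VV: "cadj V ** V = mat 1" using V unfolding unitary_def by simp
  let ?A = "outer h1 - outer h2"
  have tr: "trace (V ** X ** cadj V) = trace X" for X :: "complex^'m^'m"
    by (metis VV matrix_mul_assoc matrix_mul_lid trace_mul_sym)
  have "trace ?A = cinner h1 h1 - cinner h2 h2"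
    unfolding trace_def outer_def cinner_def by (simp add: sum_subtractf mult.commute)
  thus "cinner h1 h1 - cinner h2 h2 = (\<Sum>i\<in>UNIV. d i)"
    unfolding eig tr trace_cdiag by simp
  have AA: "?A ** ?A = V ** cdiag (\<lambda>i. d i * d i) ** cadj V"
    unfolding eig cdiag_mult[symmetric]
    by (metis VV matrix_mul_assoc matrix_mul_rid)
  have "trace (?A ** ?A) = (\<Sum>i\<in>UNIV. \<Sum>k\<in>UNIV.
      (h1$i * cnj (h1$i)) * (h1$k * cnj (h1$k)) - (cnj (h2$i) * h1$i) * (cnj (h1$k) * h2$k)
      - (cnj (h1$i) * h2$i) * (cnj (h2$k) * h1$k) + (h2$i * cnj (h2$i)) * (h2$k * cnj (h2$k)))"
    unfolding trace_def matrix_matrix_mult_def outer_def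
    by (intro sum.cong refl) (simp add: algebra_simps)
  also have "\<dots> = (\<Sum>i\<in>UNIV. h1$i * cnj (h1$i)) * (\<Sum>k\<in>UNIV. h1$k * cnj (h1$k))
      - (\<Sum>i\<in>UNIV. cnj (h2$i) * h1$i) * (\<Sum>k\<in>UNIV. cnj (h1$k) * h2$k)
      - (\<Sum>i\<in>UNIV. cnj (h1$i) * h2$i) * (\<Sum>k\<in>UNIV. cnj (h2$k) * h1$k)
      + (\<Sum>i\<in>UNIV. h2$i * cnj (h2$i)) * (\<Sum>k\<in>UNIV. h2$k * cnj (h2$k))"
    unfolding sum_product by (simp only: sum.distrib sum_subtractf)
  also have "\<dots> = (cinner h1 h1)\<^sup>2 + (cinner h2 h2)\<^sup>2 - 2 * (cinner h1 h2 * cinner h2 h1)"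
    unfolding cinner_def power2_eq_square by (simp add: mult.commute)
  finally show "(cinner h1 h1)\<^sup>2 + (cinner h2 h2)\<^sup>2 - 2 * (cinner h1 h2 * cinner h2 h1) = (\<Sum>i\<in>UNIV. (d i)\<^sup>2)"
    unfolding AA tr trace_cdiag by (simp add: power2_eq_square)
qed



lemma RA1:
  fixes l1 l2 g1 g2 \<rho> t u :: real
  assumes l1: "l1 > 0" and l2: "l2 > 0" and r0: "\<rho> \<ge> 0" and u0: "u \<ge> 0"
    and E1: "g1 - g2 = l1 - l2"
    and E2: "g1\<^sup>2 + g2\<^sup>2 - 2 * \<rho>\<^sup>2 = l1\<^sup>2 + l2\<^sup>2"
    and E3: "t - u = l1"
    and E4: "(g1 - l1)\<^sup>2 * t = \<rho>\<^sup>2 * u"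
    and E5: "\<rho>\<^sup>2 * t = (g2 + l1)\<^sup>2 * u"
  shows "g1 * g2 - \<rho>\<^sup>2 = l1 * l2" and "l1 * (g1 + l2) = t * (l1 + l2)" and "t \<ge> l1"
proof -
  have g2: "g2 = g1 - l1 + l2" using E1 by simp
  show D: "g1 * g2 - \<rho>\<^sup>2 = l1 * l2"
  proof -
    have "(g1 - g2)\<^sup>2 = (l1 - l2)\<^sup>2" using E1 by simp
    thus ?thesis using E2 by (simp add: power2_eq_square algebra_simps)
  qed
  show "t \<ge> l1" using E3 u0 by simp
  have r2: "\<rho>\<^sup>2 = (g1 - l1) * (g1 + l2)" using D g2 by (simp add: algebra_simps power2_eq_square)
  have u: "u = t - l1" using E3 by simp
  have key: "(g1 - l1) * (l1 * (g1 + l2) - t * (l1 + l2)) = 0"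
    using E4 unfolding r2 u by (simp add: power2_eq_square algebra_simps)
  show "l1 * (g1 + l2) = t * (l1 + l2)"
  proof (cases "g1 = l1")
    case True
    hence "\<rho>\<^sup>2 = 0" using r2 by simp
    hence "(g2 + l1)\<^sup>2 * u = 0" using E5 by simp
    moreover have "g2 + l1 > 0" using True g2 l1 l2 by simp
    ultimately have "u = 0" by simp
    hence "t = l1" using E3 by simp
    thus ?thesis using True by (simp add: algebra_simps)
  next
    case False thus ?thesis using key by simp
  qed
qed

lemma RA1b:
  fixes l1 l2 g1 g2 \<rho> t :: real
  assumes l1: "l1 > 0" and l2: "l2 > 0" and r0: "\<rho> \<ge> 0" and tl: "t \<ge> l1"
    and D: "g1 * g2 - \<rho>\<^sup>2 = l1 * l2" and G: "l1 * (g1 + l2) = t * (l1 + l2)"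
    and E1: "g1 - g2 = l1 - l2"
  defines "c2 \<equiv> l1 / t"
  defines "s \<equiv> sqrt (1 - c2)"
  shows "s\<^sup>2 = 1 - c2" "0 \<le> s" "s < 1" "c2 > 0"
    "g1 = (l1 + l2 * s\<^sup>2) / c2" "g2 = (l2 + l1 * s\<^sup>2) / c2" "\<rho> = (l1 + l2) * s / c2"
proof -
  have t0: "t > 0" using l1 tl by simp
  show c0: "c2 > 0" unfolding c2_def using l1 t0 by simp
  have c1: "c2 \<le> 1" unfolding c2_def using tl t0 by simp
  show s2: "s\<^sup>2 = 1 - c2" unfolding s_def using c1 by simp
  show "0 \<le> s" unfolding s_def using c1 by simp
  show "s < 1" unfolding s_def using c0 c1 by simp
  have t: "t = l1 / c2" unfolding c2_def using l1 t0 by simp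
  show g1: "g1 = (l1 + l2 * s\<^sup>2) / c2"
  proof -
    have "l1 * (g1 + l2) = l1 * ((l1 + l2) / c2)" using G unfolding t by simp
    hence "g1 + l2 = (l1 + l2) / c2" using l1 by (metis mult_cancel_left order_less_irrefl)
    thus ?thesis using c0 unfolding s2 by (simp add: field_simps)
  qed
  show g2: "g2 = (l2 + l1 * s\<^sup>2) / c2"
    using E1 c0 unfolding g1 s2 by (simp add: field_simps)
  have "\<rho>\<^sup>2 = ((l1 + l2) * s / c2)\<^sup>2"
  proof -
    have "\<rho>\<^sup>2 = g1 * g2 - l1 * l2" using D by simp
    also have "\<dots> = ((l1 + l2 * s\<^sup>2) * (l2 + l1 * s\<^sup>2) - l1 * l2 * c2\<^sup>2) / c2\<^sup>2"
      unfolding g1 g2 using c0 by (simp add: field_simps power2_eq_square)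
    also have "\<dots> = ((l1 + l2) * s / c2)\<^sup>2"
    proof -
      have cs: "c2 = 1 - s\<^sup>2" using s2 by simp
      have "(l1 + l2 * s\<^sup>2) * (l2 + l1 * s\<^sup>2) - l1 * l2 * c2\<^sup>2 = ((l1 + l2) * s)\<^sup>2"
        unfolding cs by (simp add: power2_eq_square algebra_simps)
      thus ?thesis by (simp add: power_divide)
    qed
    finally show ?thesis .
  qed
  thus "\<rho> = (l1 + l2) * s / c2"
    using r0 c0 l1 l2 \<open>0 \<le> s\<close> by (simp add: power2_eq_iff_nonneg)
qed



lemma val_eq:
  fixes g1 g2 \<rho> D :: real
  assumes "g1 \<le> g2" "\<rho> \<le> g1" "D = g1 * g2 - \<rho>\<^sup>2" "D > 0"
  shows "(if \<rho> \<ge> g1 then g1 else D / (g1 + g2 - 2*\<rho>)) = D / (g1 + g2 - 2*\<rho>)"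
proof (cases "\<rho> \<ge> g1")
  case True
  hence r: "\<rho> = g1" using assms by simp
  have "g2 \<noteq> g1" using assms unfolding r by (auto simp: power2_eq_square)
  hence "g2 - g1 \<noteq> 0" by simp
  thus ?thesis using True assms unfolding r by (simp add: field_simps power2_eq_square)
qed simp

lemma RA2:
  fixes l1 l2 s c2 g1 g2 \<rho> D val R \<kappa> :: real
  assumes l1: "l1 > 0" and l2: "l2 > 0" and s0: "0 \<le> s" and s1: "s < 1"
    and c2: "c2 = 1 - s\<^sup>2"
    and g1: "g1 = (l1 + l2 * s\<^sup>2) / c2" and g2: "g2 = (l2 + l1 * s\<^sup>2) / c2"
    and r: "\<rho> = (l1 + l2) * s / c2"
    and D: "D = l1 * l2" and DD: "D = g1 * g2 - \<rho>\<^sup>2"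
    and val: "val = (if g1 \<le> g2 then (if \<rho> \<ge> g1 then g1 else D/(g1+g2-2*\<rho>))
                     else (if \<rho> \<ge> g2 then g2 else D/(g1+g2-2*\<rho>)))"
    and R: "R = val * (g1 + g2) / D"
    and k: "\<kappa> = l1 / l2"
  shows "(0 < \<kappa> \<and> \<kappa> \<le> 1 \<and> 0 \<le> s \<and> s \<le> \<kappa> \<longrightarrow> R = (1 + s\<^sup>2) / (1 - s)\<^sup>2)
       \<and> (0 < \<kappa> \<and> \<kappa> \<le> 1 \<and> \<kappa> < s \<and> s < 1 \<longrightarrow>
            R = (1 + s\<^sup>2) * (\<kappa> + s\<^sup>2) * (1 + 1 / \<kappa>) / c2\<^sup>2)
       \<and> (\<kappa> > 1 \<and> 0 \<le> s \<and> s \<le> 1 / \<kappa> \<longrightarrow> R = (1 + s\<^sup>2) / (1 - s)\<^sup>2)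
       \<and> (\<kappa> > 1 \<and> 1 / \<kappa> < s \<and> s < 1 \<longrightarrow>
            R = (1 + s\<^sup>2) * (1 / \<kappa> + s\<^sup>2) * (1 + \<kappa>) / c2\<^sup>2)"
proof -
  have c0: "c2 > 0" unfolding c2 using s0 s1 by (simp add: power_less_one_iff abs_square_less_1)
  have Dp: "D > 0" unfolding D using l1 l2 by simp
  have sum: "g1 + g2 = (l1 + l2) * (1 + s\<^sup>2) / c2" unfolding g1 g2 using c0 by (simp add: field_simps)
  have den: "g1 + g2 - 2*\<rho> = (l1 + l2) * (1 - s)\<^sup>2 / c2" unfolding g1 g2 r
    using c0 by (simp add: field_simps power2_eq_square)
  have Q: "D / (g1 + g2 - 2*\<rho>) * (g1 + g2) / D = (1 + s\<^sup>2) / (1 - s)\<^sup>2"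
  proof -
    have gen: "\<And>a b c x. a > 0 \<Longrightarrow> b > 0 \<Longrightarrow> c > 0 \<Longrightarrow> D / (a * b / c) * (a * x / c) / D = x / b"
      using Dp by (simp add: field_simps)
    have "(1 - s)\<^sup>2 > 0" using s1 by simp
    thus ?thesis unfolding den unfolding sum using gen[of "l1 + l2" "(1 - s)\<^sup>2" c2 "1 + s\<^sup>2"] l1 l2 c0 by simp
  qed
  have d12: "g1 - g2 = l1 - l2"
  proof -
    have "g1 - g2 = ((l1 + l2 * s\<^sup>2) - (l2 + l1 * s\<^sup>2)) / c2" unfolding g1 g2 by (simp add: diff_divide_distrib)
    also have "\<dots> = (l1 - l2) * c2 / c2" unfolding c2 by (simp add: algebra_simps)
    finally show ?thesis using c0 by simp
  qed
  have rg1: "\<rho> - g1 = (1 - s) * (l2 * s - l1) / c2" unfolding g1 r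
    using c0 by (simp add: field_simps power2_eq_square)
  have rg2: "\<rho> - g2 = (1 - s) * (l1 * s - l2) / c2" unfolding g2 r
    using c0 by (simp add: field_simps power2_eq_square)
  have c22: "c2\<^sup>2 = c2 * c2" by (simp add: power2_eq_square)
  show ?thesis
  proof (intro conjI impI)
    assume a: "0 < \<kappa> \<and> \<kappa> \<le> 1 \<and> 0 \<le> s \<and> s \<le> \<kappa>"
    have "l1 \<le> l2" using a l2 unfolding k by (simp add: field_simps)
    hence g: "g1 \<le> g2" using d12 by simp
    have "l2 * s \<le> l1" using a l2 unfolding k by (simp add: field_simps)
    hence "\<rho> - g1 \<le> 0" unfolding rg1 using s1 c0 by (simp add: divide_nonpos_pos mult_nonneg_nonpos)
    hence "val = D / (g1 + g2 - 2*\<rho>)" unfolding val using val_eq[OF g _ DD Dp] g by simp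
    thus "R = (1 + s\<^sup>2) / (1 - s)\<^sup>2" unfolding R Q[symmetric] by simp
  next
    assume a: "0 < \<kappa> \<and> \<kappa> \<le> 1 \<and> \<kappa> < s \<and> s < 1"
    have "l1 \<le> l2" using a l2 unfolding k by (simp add: field_simps)
    hence g: "g1 \<le> g2" using d12 by simp
    have "l2 * s > l1" using a l2 unfolding k by (simp add: field_simps)
    hence "\<rho> - g1 > 0" unfolding rg1 using s1 c0 by simp
    hence "val = g1" unfolding val using g by simp
    hence RR: "R = g1 * (g1 + g2) / D" unfolding R by simp
    have e1: "\<kappa> + s\<^sup>2 = (l1 + l2 * s\<^sup>2) / l2" unfolding k using l2 by (simp add: field_simps)
    have e2: "1 + 1 / \<kappa> = (l1 + l2) / l1" unfolding k using l1 l2 by (simp add: field_simps)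
    show "R = (1 + s\<^sup>2) * (\<kappa> + s\<^sup>2) * (1 + 1 / \<kappa>) / c2\<^sup>2"
      unfolding RR e1 e2 unfolding sum unfolding g1 D c22 using c0 l1 l2 by (simp add: field_simps)
  next
    assume a: "\<kappa> > 1 \<and> 0 \<le> s \<and> s \<le> 1 / \<kappa>"
    have "l1 > l2" using a l2 unfolding k by (simp add: field_simps)
    hence g: "\<not> g1 \<le> g2" using d12 by simp
    have "l1 * s \<le> l2" using a l1 l2 unfolding k by (simp add: field_simps)
    hence "\<rho> - g2 \<le> 0" unfolding rg2 using s1 c0 by (simp add: divide_nonpos_pos mult_nonneg_nonpos)
    moreover have "D = g2 * g1 - \<rho>\<^sup>2" using DD by simp
    ultimately have ve: "(if \<rho> \<ge> g2 then g2 else D/(g2+g1-2*\<rho>)) = D/(g2+g1-2*\<rho>)"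
      using val_eq[of g2 g1 \<rho> D] g Dp by simp
    moreover have "val = (if \<rho> \<ge> g2 then g2 else D/(g2+g1-2*\<rho>))" unfolding val using g by (simp add: add.commute[of g1 g2])
    ultimately have "val = D / (g2 + g1 - 2*\<rho>)" by simp
    thus "R = (1 + s\<^sup>2) / (1 - s)\<^sup>2" unfolding R Q[symmetric] by (simp add: add.commute)
  next
    assume a: "\<kappa> > 1 \<and> 1 / \<kappa> < s \<and> s < 1"
    have "l1 > l2" using a l2 unfolding k by (simp add: field_simps)
    hence g: "\<not> g1 \<le> g2" using d12 by simp
    have "l1 * s > l2" using a l1 l2 unfolding k by (simp add: field_simps)
    hence "\<rho> - g2 > 0" unfolding rg2 using s1 c0 by simp
    hence "val = g2" unfolding val using g by simp
    hence RR: "R = g2 * (g1 + g2) / D" unfolding R by simp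
    have e1: "1 / \<kappa> + s\<^sup>2 = (l2 + l1 * s\<^sup>2) / l1" unfolding k using l1 l2 by (simp add: field_simps)
    have e2: "1 + \<kappa> = (l1 + l2) / l2" unfolding k using l1 l2 by (simp add: field_simps)
    show "R = (1 + s\<^sup>2) * (1 / \<kappa> + s\<^sup>2) * (1 + \<kappa>) / c2\<^sup>2"
      unfolding RR e1 e2 unfolding sum unfolding g2 D c22 using c0 l1 l2 by (simp add: field_simps)
  qed
qed


lemma cinner_diff_right: "cinner h (u - v) = cinner h u - cinner h v"
  by (simp add: cinner_def right_diff_distrib sum_subtractf)
lemma eig_rel:
  fixes h1 h2 v :: "complex^'m"
  assumes vec: "p *s h1 - q *s h2 = of_real lam1 *s v"
  and h11: "cinner h1 h1 = of_real g1" and h22: "cinner h2 h2 = of_real g2"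
  and z: "cinner h1 h2 = z" and z2: "cinner h2 h1 = cnj z"
  and p: "cinner h1 v = p" and q: "cinner h2 v = q" and vv: "cinner v v = 1"
  shows "p * of_real g1 - q * z = of_real lam1 * p"
    and "p * cnj z - q * of_real g2 = of_real lam1 * q"
    and "p * cnj p - q * cnj q = of_real lam1"
proof -
  have "cinner h1 (p *s h1 - q *s h2) = cinner h1 (of_real lam1 *s v)" using vec by (rule arg_cong)
  thus "p * of_real g1 - q * z = of_real lam1 * p"
    unfolding cinner_diff_right cinner_smult_right h11 z p by (simp add: mult.commute)
  have "cinner h2 (p *s h1 - q *s h2) = cinner h2 (of_real lam1 *s v)" using vec by (rule arg_cong)
  thus "p * cnj z - q * of_real g2 = of_real lam1 * q"
    unfolding cinner_diff_right cinner_smult_right h22 z2 q by (simp add: mult.commute)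
  have cv1: "cinner v h1 = cnj p" using p by (metis cinner_cnj)
  have cv2: "cinner v h2 = cnj q" using q by (metis cinner_cnj)
  have "cinner v (p *s h1 - q *s h2) = cinner v (of_real lam1 *s v)" using vec by (rule arg_cong)
  thus "p * cnj p - q * cnj q = of_real lam1"
    unfolding cinner_diff_right cinner_smult_right cv1 cv2 vv by simp
qed

lemma cmod_rels:
  fixes p q z :: complex and g1 g2 lam1 :: real
  assumes E4c: "p * of_real g1 - q * z = of_real lam1 * p"
    and E5c: "p * cnj z - q * of_real g2 = of_real lam1 * q"
  shows "(g1 - lam1)\<^sup>2 * (cmod p)\<^sup>2 = (cmod z)\<^sup>2 * (cmod q)\<^sup>2"
    and "(cmod z)\<^sup>2 * (cmod p)\<^sup>2 = (g2 + lam1)\<^sup>2 * (cmod q)\<^sup>2"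
proof -
  have "of_real (g1 - lam1) * p = q * z" using E4c by (simp add: algebra_simps)
  hence "cmod (of_real (g1 - lam1) * p) = cmod (q * z)" by simp
  hence "\<bar>g1 - lam1\<bar> * cmod p = cmod q * cmod z" unfolding norm_mult norm_of_real .
  hence "(\<bar>g1 - lam1\<bar> * cmod p)\<^sup>2 = (cmod q * cmod z)\<^sup>2" by simp
  thus "(g1 - lam1)\<^sup>2 * (cmod p)\<^sup>2 = (cmod z)\<^sup>2 * (cmod q)\<^sup>2"
    unfolding power_mult_distrib power2_abs by simp
  have "p * cnj z = of_real (g2 + lam1) * q" using E5c by (simp add: algebra_simps)
  hence "cmod (p * cnj z) = cmod (of_real (g2 + lam1) * q)" by simp
  hence "cmod p * cmod z = \<bar>g2 + lam1\<bar> * cmod q" unfolding norm_mult norm_of_real complex_mod_cnj .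
  hence "(cmod p * cmod z)\<^sup>2 = (\<bar>g2 + lam1\<bar> * cmod q)\<^sup>2" by simp
  thus "(cmod z)\<^sup>2 * (cmod p)\<^sup>2 = (g2 + lam1)\<^sup>2 * (cmod q)\<^sup>2"
    unfolding power_mult_distrib power2_abs by (metis mult.commute)
qed




lemma md_val_general:
  fixes h1 h2 :: "complex^'m" and P :: real
  defines "g1 \<equiv> (norm h1)\<^sup>2" and "g2 \<equiv> (norm h2)\<^sup>2" and "\<rho> \<equiv> cmod (cinner h1 h2)"
  defines "D \<equiv> g1 * g2 - \<rho>\<^sup>2"
  assumes D: "D > 0" and P: "P > 0"
  shows "Sup {min ((cmod (cinner h1 w))\<^sup>2) ((cmod (cinner h2 w))\<^sup>2) | w. (norm w)\<^sup>2 = P}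
    = P * (if g1 \<le> g2 then (if \<rho> \<ge> g1 then g1 else D/(g1+g2-2*\<rho>))
                     else (if \<rho> \<ge> g2 then g2 else D/(g1+g2-2*\<rho>)))"
proof (cases "g1 \<le> g2")
  case True
  thus ?thesis using md_sup[of h1 h2 P] D P unfolding g1_def g2_def \<rho>_def D_def by simp
next
  case False
  have r: "cmod (cinner h2 h1) = \<rho>" unfolding \<rho>_def by (metis cinner_cnj complex_mod_cnj)
  have S: "{min ((cmod (cinner h1 w))\<^sup>2) ((cmod (cinner h2 w))\<^sup>2) | w. (norm w)\<^sup>2 = P}
     = {min ((cmod (cinner h2 w))\<^sup>2) ((cmod (cinner h1 w))\<^sup>2) | w. (norm w)\<^sup>2 = P}"
    by (simp add: min.commute)
  have "Sup {min ((cmod (cinner h2 w))\<^sup>2) ((cmod (cinner h1 w))\<^sup>2) | w. (norm w)\<^sup>2 = P}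
     = P * (if \<rho> \<ge> g2 then g2 else (g2 * g1 - \<rho>\<^sup>2) / (g2 + g1 - 2*\<rho>))"
    using md_sup[of h2 h1 P] D P False unfolding g1_def g2_def r D_def by (simp add: mult.commute)
  thus ?thesis unfolding S using False by (simp add: D_def mult.commute add.commute)
qed
theorem corollary1:
  fixes h1 h2 :: "complex^'m" and V :: "complex^'m^'m"
    and P \<sigma> lam1 lam2 \<kappa> \<theta> \<eta> :: real and i1 i2 :: 'm
  assumes indep: "lin_indep2 h1 h2"
    and P: "P > 0" and \<sigma>: "\<sigma> > 0"
    and l1: "lam1 > 0" and l2: "lam2 > 0"
    and idx: "i1 \<noteq> i2"
    and V: "unitary V"
    and eig: "outer h1 - outer h2 =
      V ** cdiag (\<lambda>i. if i = i1 then complex_of_real lam1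
                     else if i = i2 then - complex_of_real lam2 else 0) ** cadj V"
    and \<kappa>_def: "\<kappa> = lam1 / lam2"
    and \<theta>_def: "\<theta> = arccos (sqrt lam1 / cmod ((cadj V *v h1) $ i1))"
    and \<eta>_def: "\<eta> = 10 * log 10 (snr_md P \<sigma> h1 h2 / snr_zf P \<sigma> h1 h2)"
  shows "(0 < \<kappa> \<and> \<kappa> \<le> 1 \<and> 0 \<le> sin \<theta> \<and> sin \<theta> \<le> \<kappa> \<longrightarrow>
            \<eta> = 10 * log 10 ((1 + (sin \<theta>)\<^sup>2) / (1 - sin \<theta>)\<^sup>2))
       \<and> (0 < \<kappa> \<and> \<kappa> \<le> 1 \<and> \<kappa> < sin \<theta> \<and> sin \<theta> < 1 \<longrightarrow>
            \<eta> = 10 * log 10 ((1 + (sin \<theta>)\<^sup>2) * (\<kappa> + (sin \<theta>)\<^sup>2) * (1 + 1 / \<kappa>) / (cos \<theta>) ^ 4))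
       \<and> (\<kappa> > 1 \<and> 0 \<le> sin \<theta> \<and> sin \<theta> \<le> 1 / \<kappa> \<longrightarrow>
            \<eta> = 10 * log 10 ((1 + (sin \<theta>)\<^sup>2) / (1 - sin \<theta>)\<^sup>2))
       \<and> (\<kappa> > 1 \<and> 1 / \<kappa> < sin \<theta> \<and> sin \<theta> < 1 \<longrightarrow>
            \<eta> = 10 * log 10 ((1 + (sin \<theta>)\<^sup>2) * (1 / \<kappa> + (sin \<theta>)\<^sup>2) * (1 + \<kappa>) / (cos \<theta>) ^ 4))"
proof -
  define d :: "'m \<Rightarrow> complex" where
    "d = (\<lambda>i. if i = i1 then complex_of_real lam1 else if i = i2 then - complex_of_real lam2 else 0)"
  have d_alt: "d = (\<lambda>i. (if i = i1 then complex_of_real lam1 else 0) + (if i = i2 then - complex_of_real lam2 else 0))"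
    unfolding d_def using idx by auto
  have d2_alt: "(\<lambda>i. (d i)\<^sup>2) = (\<lambda>i. (if i = i1 then complex_of_real (lam1\<^sup>2) else 0) + (if i = i2 then complex_of_real (lam2\<^sup>2) else 0))"
    unfolding d_def using idx by auto
  have sd: "(\<Sum>i\<in>UNIV. d i) = of_real (lam1 - lam2)"
    unfolding d_alt sum.distrib by simp
  have sd2: "(\<Sum>i\<in>UNIV. (d i)\<^sup>2) = of_real (lam1\<^sup>2 + lam2\<^sup>2)"
    unfolding d2_alt sum.distrib by simp
  have di1: "d i1 = of_real lam1" unfolding d_def by simp
  have eig': "outer h1 - outer h2 = V ** cdiag d ** cadj V" using eig unfolding d_def .
  define v where "v = (\<chi> j. V $ j $ i1)"
  note sc = spectral_col[OF V eig', of i1, folded v_def]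
  note st = spectral_trace[OF V eig']
  define g1 where "g1 = (norm h1)\<^sup>2"
  define g2 where "g2 = (norm h2)\<^sup>2"
  define z where "z = cinner h1 h2"
  define \<rho> where "\<rho> = cmod z"
  define p where "p = cinner h1 v"
  define q where "q = cinner h2 v"
  define t where "t = (cmod p)\<^sup>2"
  define u where "u = (cmod q)\<^sup>2"
  have h11: "cinner h1 h1 = of_real g1" unfolding g1_def by (rule cinner_self)
  have h22: "cinner h2 h2 = of_real g2" unfolding g2_def by (rule cinner_self)
  have h21: "cinner h2 h1 = cnj z" unfolding z_def by (simp add: cinner_cnj)
  have zz: "z * cnj z = of_real (\<rho>\<^sup>2)" unfolding \<rho>_def by (rule complex_norm_square[symmetric])
  have pp: "p * cnj p = of_real t" unfolding t_def by (rule complex_norm_square[symmetric])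
  have qq: "q * cnj q = of_real u" unfolding u_def by (rule complex_norm_square[symmetric])
  have vec: "p *s h1 - q *s h2 = of_real lam1 *s v" using sc(4) unfolding p_def q_def di1 .
  have E1: "g1 - g2 = lam1 - lam2"
    using st(1) unfolding sd h11 h22 by (metis of_real_diff of_real_eq_iff)
  have E2: "g1\<^sup>2 + g2\<^sup>2 - 2 * \<rho>\<^sup>2 = lam1\<^sup>2 + lam2\<^sup>2"
  proof -
    have "complex_of_real (g1\<^sup>2 + g2\<^sup>2 - 2 * \<rho>\<^sup>2) = of_real (lam1\<^sup>2 + lam2\<^sup>2)"
      using st(2) unfolding sd2 h11 h22 h21 z_def[symmetric] zz by simp
    thus ?thesis by (simp only: of_real_eq_iff)
  qed
  have E4c: "p * of_real g1 - q * z = of_real lam1 * p"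
   and E5c: "p * cnj z - q * of_real g2 = of_real lam1 * q"
   and E3c: "p * cnj p - q * cnj q = of_real lam1"
    using eig_rel[OF vec h11 h22 z_def[symmetric] h21 p_def[symmetric] q_def[symmetric] sc(1)] by blast+
  have E3: "t - u = lam1"
    using E3c unfolding pp qq by (metis of_real_diff of_real_eq_iff)
  note CR = cmod_rels[OF E4c E5c, folded t_def u_def \<rho>_def]
  have E4: "(g1 - lam1)\<^sup>2 * t = \<rho>\<^sup>2 * u" using CR(1) .
  have E5: "\<rho>\<^sup>2 * t = (g2 + lam1)\<^sup>2 * u" using CR(2) .
  have r0: "\<rho> \<ge> 0" unfolding \<rho>_def by simp
  have u0: "u \<ge> 0" unfolding u_def by simp
  note R1 = RA1[OF l1 l2 r0 u0 E1 E2 E3 E4 E5]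
  define c2 where "c2 = lam1 / t"
  define s where "s = sqrt (1 - c2)"
  note R1b = RA1b[OF l1 l2 r0 R1(3) R1(1) R1(2) E1, folded c2_def, folded s_def]
  define D where "D = g1 * g2 - \<rho>\<^sup>2"
  have D: "D = lam1 * lam2" unfolding D_def using R1(1) .
  have Dp: "D > 0" unfolding D using l1 l2 by simp
  define val where "val = (if g1 \<le> g2 then (if \<rho> \<ge> g1 then g1 else D/(g1+g2-2*\<rho>))
                     else (if \<rho> \<ge> g2 then g2 else D/(g1+g2-2*\<rho>)))"
  have md: "snr_md P \<sigma> h1 h2 = (1 / \<sigma>\<^sup>2) * (P * val)"
    unfolding snr_md_def val_def using md_val_general[of h1 h2 P] Dp P
    unfolding g1_def g2_def \<rho>_def z_def D_def by simp
  have zf: "snr_zf P \<sigma> h1 h2 = P * D / (\<sigma>\<^sup>2 * (g1 + g2))"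
    using zf_val[of h1 h2 P \<sigma>] Dp unfolding g1_def g2_def \<rho>_def z_def D_def by simp
  have gpos: "g1 + g2 > 0"
  proof -
    have "g1 \<ge> 0" "g2 \<ge> 0" unfolding g1_def g2_def by simp_all
    moreover have "g1 \<noteq> 0" using Dp unfolding D_def by (auto simp: power2_eq_square)
    ultimately show ?thesis by simp
  qed
  define R where "R = val * (g1 + g2) / D"
  have ratio: "snr_md P \<sigma> h1 h2 / snr_zf P \<sigma> h1 h2 = R"
    unfolding md zf R_def using P \<sigma> Dp gpos by (simp add: field_simps)
  have c2s: "c2 = 1 - s\<^sup>2" using R1b(1) by simp
  note R2 = RA2[OF l1 l2 R1b(2) R1b(3) c2s R1b(5) R1b(6) R1b(7) D D_def val_def R_def \<kappa>_def]
  have tp: "t > 0" using R1(3) l1 by simp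
  have cp: "cmod ((cadj V *v h1) $ i1) = sqrt t"
  proof -
    have "cinner v h1 = cnj p" unfolding p_def by (rule cinner_cnj[symmetric])
    thus ?thesis unfolding sc(2) t_def by simp
  qed
  have x0: "sqrt lam1 / cmod ((cadj V *v h1) $ i1) = sqrt c2"
    unfolding cp c2_def by (simp add: real_sqrt_divide)
  have c2le: "c2 \<le> 1" using R1b(1) by (metis diff_ge_0_iff_ge zero_le_power2)
  have cos: "cos \<theta> = sqrt c2" and sin: "sin \<theta> = s"
  proof -
    have "0 \<le> sqrt c2" using R1b(4) by simp
    hence "-1 \<le> sqrt c2" by linarith
    moreover have "sqrt c2 \<le> 1" using c2le by simp
    ultimately have "-1 \<le> sqrt c2" "sqrt c2 \<le> 1" by auto
    thus "cos \<theta> = sqrt c2" unfolding \<theta>_def x0 by (simp add: cos_arccos)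
    show "sin \<theta> = s" unfolding \<theta>_def x0 s_def using \<open>-1 \<le> sqrt c2\<close> \<open>sqrt c2 \<le> 1\<close> R1b(4)
      by (simp add: sin_arccos)
  qed
  have cos4: "(cos \<theta>) ^ 4 = c2\<^sup>2"
    unfolding cos power4_eq_xxxx power2_eq_square using R1b(4) by simp
  have eta: "\<eta> = 10 * log 10 R" unfolding \<eta>_def ratio ..
  show ?thesis unfolding eta sin cos4 using R2 by (elim conjE) (intro conjI impI; simp only:)
qed


end
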